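(* Let $\varphi : X \to X$ be a morphism in $\mathscr{C}$ and let $\kappa : K \to X$ be a kernel of $\varphi$. Then $\varphi$ has a core inverse if and only if $\varphi$ has a cokernel $\lambda : X \to L$ such that both $\kappa\lambda : K \to L$ and $\varphi^{*}\varphi^{3}+\kappa^{*}\kappa : X \to X$ are invertible. In this case, $\gamma=\lambda(\kappa\lambda)^{-1} : X \to K$ is a cokernel of $\varphi$, $\varphi^{\mathrm{core}}\varphi+\gamma\kappa=1_X$, and $$\varphi^{\mathrm{core}}=\varphi^{2}(\varphi^{*}\varphi^{3}+\kappa^{*}\kappa)^{-1}\varphi^{*}.$$
   Context: $\mathscr{C}$ is an additive category with an involution $*$: a map on morphisms sending $\varphi : X\to Y$ to $\varphi^* : Y \to X$ such that $(\varphi^* )^*=\varphi$, $(\varphi\psi)^*=\psi^*\varphi^*$ and $(\varphi+\phi)^*=\varphi^*+\phi^*$. Composition is written left to right: for $\varphi : X\to Y$ and $\psi : Y\to Z$, $\varphi\psi : X \to Z$ means "first $\varphi$, then $\psi$"; powers $\varphi^n$ of an endomorphism are the $n$-fold composites. A kernel of $\varphi : X\to Y$ is a morphism $\kappa : K\to X$ with $\kappa\varphi=0$ such that every $\alpha : M\to X$ with $\alpha\varphi=0$ factors uniquely as $\alpha=\alpha'\kappa$. A cokernel of $\varphi$ is a morphism $\lambda : Y\to L$ with $\varphi\lambda=0$ such that every $\beta : Y\to M$ with $\varphi\beta=0$ factors uniquely as $\beta=\lambda\beta'$. A morphism is invertible if it has a two-sided inverse. For $\varphi : X\to X$, a core inverse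 of $\varphi$ is a morphism $\chi : X\to X$ with $(\varphi\chi)^*=\varphi\chi$, $\varphi\chi^2=\chi$ and $\chi\varphi^2=\varphi$. It is unique when it exists and is denoted $\varphi^{\mathrm{core}}$. *)

theory Defs
  imports Main
begin

text \<open>An additive category with involution, presented by hom-sets.
  Composition is diagrammatic: cmp f g means first f, then g.\<close>

record ('o, 'm) icat =
  Obj  :: "'o set"
  Hom  :: "'o \<Rightarrow> 'o \<Rightarrow> 'm set"
  cmp  :: "'m \<Rightarrow> 'm \<Rightarrow> 'm"
  idm  :: "'o \<Rightarrow> 'm"
  zer  :: "'o \<Rightarrow> 'o \<Rightarrow> 'm"
  addm :: "'m \<Rightarrow> 'm \<Rightarrow> 'm"
  negm :: "'m \<Rightarrow> 'm"
  star :: "'m \<Rightarrow> 'm"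

definition is_category :: "('o, 'm) icat \<Rightarrow> bool" where
  "is_category C \<longleftrightarrow>
     (\<forall>A B. Hom C A B \<noteq> {} \<longrightarrow> A \<in> Obj C \<and> B \<in> Obj C) \<and>
     (\<forall>A B A' B' f. f \<in> Hom C A B \<and> f \<in> Hom C A' B' \<longrightarrow> A = A' \<and> B = B') \<and>
     (\<forall>A \<in> Obj C. idm C A \<in> Hom C A A) \<and>
     (\<forall>A B D f g. f \<in> Hom C A B \<and> g \<in> Hom C B D \<longrightarrow> cmp C f g \<in> Hom C A D) \<and>
     (\<forall>A B D E f g h. f \<in> Hom C A B \<and> g \<in> Hom C B D \<and> h \<in> Hom C D E \<longrightarrow>
        cmp C (cmp C f g) h = cmp C f (cmp C g h)) \<and>
     (\<forall>A B f. f \<in> Hom C A B \<longrightarrow> cmp C (idm C A) f = f \<and> cmp C f (idm C B) = f)"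

definition is_preadditive :: "('o, 'm) icat \<Rightarrow> bool" where
  "is_preadditive C \<longleftrightarrow> is_category C \<and>
     (\<forall>A \<in> Obj C. \<forall>B \<in> Obj C. zer C A B \<in> Hom C A B) \<and>
     (\<forall>A B f g. f \<in> Hom C A B \<and> g \<in> Hom C A B \<longrightarrow> addm C f g \<in> Hom C A B) \<and>
     (\<forall>A B f. f \<in> Hom C A B \<longrightarrow> negm C f \<in> Hom C A B) \<and>
     (\<forall>A B f g h. f \<in> Hom C A B \<and> g \<in> Hom C A B \<and> h \<in> Hom C A B \<longrightarrow>
        addm C (addm C f g) h = addm C f (addm C g h)) \<and>
     (\<forall>A B f g. f \<in> Hom C A B \<and> g \<in> Hom C A B \<longrightarrow> addm C f g = addm C g f) \<and>
     (\<forall>A B f. f \<in> Hom C A B \<longrightarrow> addm C f (zer C A B) = f) \<and>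
     (\<forall>A B f. f \<in> Hom C A B \<longrightarrow> addm C f (negm C f) = zer C A B) \<and>
     (\<forall>A B D f g h. f \<in> Hom C A B \<and> g \<in> Hom C B D \<and> h \<in> Hom C B D \<longrightarrow>
        cmp C f (addm C g h) = addm C (cmp C f g) (cmp C f h)) \<and>
     (\<forall>A B D f g h. f \<in> Hom C A B \<and> g \<in> Hom C A B \<and> h \<in> Hom C B D \<longrightarrow>
        cmp C (addm C f g) h = addm C (cmp C f h) (cmp C g h))"

definition is_additive :: "('o, 'm) icat \<Rightarrow> bool" where
  "is_additive C \<longleftrightarrow> is_preadditive C \<and>
     (\<exists>Z \<in> Obj C. idm C Z = zer C Z Z) \<and>
     (\<forall>A \<in> Obj C. \<forall>B \<in> Obj C. \<exists>S \<in> Obj C. \<exists>p1 p2 i1 i2.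
        p1 \<in> Hom C S A \<and> p2 \<in> Hom C S B \<and> i1 \<in> Hom C A S \<and> i2 \<in> Hom C B S \<and>
        cmp C i1 p1 = idm C A \<and> cmp C i2 p2 = idm C B \<and>
        cmp C i1 p2 = zer C A B \<and> cmp C i2 p1 = zer C B A \<and>
        addm C (cmp C p1 i1) (cmp C p2 i2) = idm C S)"

definition is_additive_inv_cat :: "('o, 'm) icat \<Rightarrow> bool" where
  "is_additive_inv_cat C \<longleftrightarrow> is_additive C \<and>
     (\<forall>A B f. f \<in> Hom C A B \<longrightarrow> star C f \<in> Hom C B A) \<and>
     (\<forall>A B f. f \<in> Hom C A B \<longrightarrow> star C (star C f) = f) \<and>
     (\<forall>A B D f g. f \<in> Hom C A B \<and> g \<in> Hom C B D \<longrightarrow>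
        star C (cmp C f g) = cmp C (star C g) (star C f)) \<and>
     (\<forall>A B f g. f \<in> Hom C A B \<and> g \<in> Hom C A B \<longrightarrow>
        star C (addm C f g) = addm C (star C f) (star C g))"

definition is_kernel :: "('o, 'm) icat \<Rightarrow> 'o \<Rightarrow> 'o \<Rightarrow> 'm \<Rightarrow> 'o \<Rightarrow> 'm \<Rightarrow> bool" where
  "is_kernel C X Y \<phi> K \<kappa> \<longleftrightarrow>
     \<kappa> \<in> Hom C K X \<and> cmp C \<kappa> \<phi> = zer C K Y \<and>
     (\<forall>M \<alpha>. \<alpha> \<in> Hom C M X \<and> cmp C \<alpha> \<phi> = zer C M Y \<longrightarrow>
        (\<exists>!\<alpha>'. \<alpha>' \<in> Hom C M K \<and> \<alpha> = cmp C \<alpha>' \<kappa>))"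

definition is_cokernel :: "('o, 'm) icat \<Rightarrow> 'o \<Rightarrow> 'o \<Rightarrow> 'm \<Rightarrow> 'o \<Rightarrow> 'm \<Rightarrow> bool" where
  "is_cokernel C X Y \<phi> L lm \<longleftrightarrow>
     lm \<in> Hom C Y L \<and> cmp C \<phi> lm = zer C X L \<and>
     (\<forall>M \<beta>. \<beta> \<in> Hom C Y M \<and> cmp C \<phi> \<beta> = zer C X M \<longrightarrow>
        (\<exists>!\<beta>'. \<beta>' \<in> Hom C L M \<and> \<beta> = cmp C lm \<beta>'))"

definition is_inverse :: "('o, 'm) icat \<Rightarrow> 'o \<Rightarrow> 'o \<Rightarrow> 'm \<Rightarrow> 'm \<Rightarrow> bool" where
  "is_inverse C A B f g \<longleftrightarrow> f \<in> Hom C A B \<and> g \<in> Hom C B A \<and>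
     cmp C f g = idm C A \<and> cmp C g f = idm C B"

definition invertible :: "('o, 'm) icat \<Rightarrow> 'o \<Rightarrow> 'o \<Rightarrow> 'm \<Rightarrow> bool" where
  "invertible C A B f \<longleftrightarrow> (\<exists>g. is_inverse C A B f g)"

definition minv :: "('o, 'm) icat \<Rightarrow> 'o \<Rightarrow> 'o \<Rightarrow> 'm \<Rightarrow> 'm" where
  "minv C A B f = (THE g. is_inverse C A B f g)"

definition is_core_inverse :: "('o, 'm) icat \<Rightarrow> 'o \<Rightarrow> 'm \<Rightarrow> 'm \<Rightarrow> bool" where
  "is_core_inverse C X \<phi> \<chi> \<longleftrightarrow> \<chi> \<in> Hom C X X \<and>
     star C (cmp C \<phi> \<chi>) = cmp C \<phi> \<chi> \<and>
     cmp C \<phi> (cmp C \<chi> \<chi>) = \<chi> \<and>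
     cmp C \<chi> (cmp C \<phi> \<phi>) = \<phi>"

definition has_core_inverse :: "('o, 'm) icat \<Rightarrow> 'o \<Rightarrow> 'm \<Rightarrow> bool" where
  "has_core_inverse C X \<phi> \<longleftrightarrow> (\<exists>\<chi>. is_core_inverse C X \<phi> \<chi>)"

definition core_inv :: "('o, 'm) icat \<Rightarrow> 'o \<Rightarrow> 'm \<Rightarrow> 'm" where
  "core_inv C X \<phi> = (THE \<chi>. is_core_inverse C X \<phi> \<chi>)"

end

theory Submission
  imports Defs
begin

locale aic = fixes C :: "('o,'m) icat" assumes A: "is_additive_inv_cat C"
begin

abbreviation cp (infixl "\<cdot>" 70) where "f \<cdot> g \<equiv> cmp C f g"
abbreviation ad (infixl "\<oplus>" 65) where "f \<oplus> g \<equiv> addm C f g"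
abbreviation H where "H \<equiv> Hom C"
abbreviation st where "st \<equiv> star C"

lemma cat: "is_category C" and pre: "is_preadditive C" and add: "is_additive C"
  using A unfolding is_additive_inv_cat_def is_additive_def is_preadditive_def by auto

lemma objs: "f \<in> H A B \<Longrightarrow> A \<in> Obj C \<and> B \<in> Obj C"
  using cat[unfolded is_category_def, THEN conjunct1] by auto
lemma comp_hom[intro]: "f \<in> H A B \<Longrightarrow> g \<in> H B D \<Longrightarrow> f \<cdot> g \<in> H A D"
  using cat[unfolded is_category_def, THEN conjunct2, THEN conjunct2, THEN conjunct2, THEN conjunct1] by blast
lemma assoc: "f \<in> H A B \<Longrightarrow> g \<in> H B D \<Longrightarrow> h \<in> H D E \<Longrightarrow> f \<cdot> g \<cdot> h = f \<cdot> (g \<cdot> h)"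
  using cat[unfolded is_category_def, THEN conjunct2, THEN conjunct2, THEN conjunct2, THEN conjunct2, THEN conjunct1] by blast
lemma id_hom[intro]: "A \<in> Obj C \<Longrightarrow> idm C A \<in> H A A"
  using cat[unfolded is_category_def, THEN conjunct2, THEN conjunct2, THEN conjunct1] by blast
lemma idl: "f \<in> H A B \<Longrightarrow> idm C A \<cdot> f = f"
  using cat[unfolded is_category_def, THEN conjunct2, THEN conjunct2, THEN conjunct2, THEN conjunct2, THEN conjunct2] by blast
lemma idr: "f \<in> H A B \<Longrightarrow> f \<cdot> idm C B = f"
  using cat[unfolded is_category_def, THEN conjunct2, THEN conjunct2, THEN conjunct2, THEN conjunct2, THEN conjunct2] by blast
lemma zer_hom[intro]: "A \<in> Obj C \<Longrightarrow> B \<in> Obj C \<Longrightarrow> zer C A B \<in> H A B"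
  using pre[unfolded is_preadditive_def, THEN conjunct2, THEN conjunct1] by blast
lemma add_hom[intro]: "f \<in> H A B \<Longrightarrow> g \<in> H A B \<Longrightarrow> f \<oplus> g \<in> H A B"
  using pre[unfolded is_preadditive_def, THEN conjunct2, THEN conjunct2, THEN conjunct1] by blast
lemma neg_hom[intro]: "f \<in> H A B \<Longrightarrow> negm C f \<in> H A B"
  using pre[unfolded is_preadditive_def, THEN conjunct2, THEN conjunct2, THEN conjunct2, THEN conjunct1] by blast
lemma add_assoc: "f \<in> H A B \<Longrightarrow> g \<in> H A B \<Longrightarrow> h \<in> H A B \<Longrightarrow> f \<oplus> g \<oplus> h = f \<oplus> (g \<oplus> h)"
  using pre[unfolded is_preadditive_def, THEN conjunct2, THEN conjunct2, THEN conjunct2, THEN conjunct2, THEN conjunct1] by blast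
lemma add_comm: "f \<in> H A B \<Longrightarrow> g \<in> H A B \<Longrightarrow> f \<oplus> g = g \<oplus> f"
  using pre[unfolded is_preadditive_def, THEN conjunct2, THEN conjunct2, THEN conjunct2, THEN conjunct2, THEN conjunct2, THEN conjunct1] by blast
lemma add_zero: "f \<in> H A B \<Longrightarrow> f \<oplus> zer C A B = f"
  using pre[unfolded is_preadditive_def, THEN conjunct2, THEN conjunct2, THEN conjunct2, THEN conjunct2, THEN conjunct2, THEN conjunct2, THEN conjunct1] by blast
lemma add_neg: "f \<in> H A B \<Longrightarrow> f \<oplus> negm C f = zer C A B"
  using pre[unfolded is_preadditive_def, THEN conjunct2, THEN conjunct2, THEN conjunct2, THEN conjunct2, THEN conjunct2, THEN conjunct2, THEN conjunct2, THEN conjunct1] by blast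
lemma distl: "f \<in> H A B \<Longrightarrow> g \<in> H B D \<Longrightarrow> h \<in> H B D \<Longrightarrow> f \<cdot> (g \<oplus> h) = f \<cdot> g \<oplus> f \<cdot> h"
  using pre[unfolded is_preadditive_def, THEN conjunct2, THEN conjunct2, THEN conjunct2, THEN conjunct2, THEN conjunct2, THEN conjunct2, THEN conjunct2, THEN conjunct2, THEN conjunct1] by blast
lemma distr: "f \<in> H A B \<Longrightarrow> g \<in> H A B \<Longrightarrow> h \<in> H B D \<Longrightarrow> (f \<oplus> g) \<cdot> h = f \<cdot> h \<oplus> g \<cdot> h"
  using pre[unfolded is_preadditive_def, THEN conjunct2, THEN conjunct2, THEN conjunct2, THEN conjunct2, THEN conjunct2, THEN conjunct2, THEN conjunct2, THEN conjunct2, THEN conjunct2] by blast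
lemma st_hom[intro]: "f \<in> H A B \<Longrightarrow> st f \<in> H B A"
  using A[unfolded is_additive_inv_cat_def, THEN conjunct2, THEN conjunct1] by blast
lemma st_st: "f \<in> H A B \<Longrightarrow> st (st f) = f"
  using A[unfolded is_additive_inv_cat_def, THEN conjunct2, THEN conjunct2, THEN conjunct1] by blast
lemma st_cmp: "f \<in> H A B \<Longrightarrow> g \<in> H B D \<Longrightarrow> st (f \<cdot> g) = st g \<cdot> st f"
  using A[unfolded is_additive_inv_cat_def, THEN conjunct2, THEN conjunct2, THEN conjunct2, THEN conjunct1] by blast
lemma st_add: "f \<in> H A B \<Longrightarrow> g \<in> H A B \<Longrightarrow> st (f \<oplus> g) = st f \<oplus> st g"
  using A[unfolded is_additive_inv_cat_def, THEN conjunct2, THEN conjunct2, THEN conjunct2, THEN conjunct2] by blast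

lemma cancel: assumes "f \<in> H A B" "g \<in> H A B" "h \<in> H A B" "f \<oplus> g = f \<oplus> h" shows "g = h"
proof -
  have n: "negm C f \<in> H A B" using assms neg_hom by blast
  have "g = g \<oplus> (f \<oplus> negm C f)" using assms by (simp add: add_neg add_zero)
  also have "\<dots> = (f \<oplus> negm C f) \<oplus> g" using assms n add_hom add_comm by blast
  also have "\<dots> = (negm C f \<oplus> f) \<oplus> g" using assms n add_comm by simp
  also have "\<dots> = negm C f \<oplus> (f \<oplus> g)" using assms n add_assoc by blast
  also have "\<dots> = negm C f \<oplus> (f \<oplus> h)" using assms by simp
  also have "\<dots> = (negm C f \<oplus> f) \<oplus> h" using assms n add_assoc by simp
  also have "\<dots> = (f \<oplus> negm C f) \<oplus> h" using assms n add_comm by simp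
  also have "\<dots> = h \<oplus> (f \<oplus> negm C f)" using assms n add_hom add_comm by blast
  also have "\<dots> = h" using assms by (simp add: add_neg add_zero)
  finally show ?thesis .
qed

lemma zero_add: assumes "f \<in> H A B" shows "zer C A B \<oplus> f = f"
proof -
  have "A \<in> Obj C" "B \<in> Obj C" using objs assms by auto
  then have "zer C A B \<in> H A B" by (rule zer_hom)
  then show ?thesis using add_comm[OF _ assms] add_zero[OF assms] by simp
qed

lemma comp_zer_r: assumes "f \<in> H A B" "D \<in> Obj C" shows "f \<cdot> zer C B D = zer C A D"
proof -
  have B: "B \<in> Obj C" "A \<in> Obj C" using objs assms by auto
  have z: "zer C B D \<in> H B D" "zer C A D \<in> H A D" using B assms by auto
  have "f \<cdot> zer C B D \<oplus> f \<cdot> zer C B D = f \<cdot> (zer C B D \<oplus> zer C B D)"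
    using distl[OF assms(1) z(1) z(1)] by simp
  also have "\<dots> = f \<cdot> zer C B D \<oplus> zer C A D" using add_zero[OF z(1)] add_zero[OF comp_hom[OF assms(1) z(1)]] by simp
  finally show ?thesis using cancel[OF comp_hom[OF assms(1) z(1)] comp_hom[OF assms(1) z(1)] z(2)] by simp
qed
lemma comp_zer_l: assumes "f \<in> H B D" "A \<in> Obj C" shows "zer C A B \<cdot> f = zer C A D"
proof -
  have B: "B \<in> Obj C" "D \<in> Obj C" using objs assms by auto
  have z: "zer C A B \<in> H A B" "zer C A D \<in> H A D" using B assms by auto
  have "zer C A B \<cdot> f \<oplus> zer C A B \<cdot> f = (zer C A B \<oplus> zer C A B) \<cdot> f"
    using distr[OF z(1) z(1) assms(1)] by simp
  also have "\<dots> = zer C A B \<cdot> f \<oplus> zer C A D" using add_zero[OF z(1)] add_zero[OF comp_hom[OF z(1) assms(1)]] by simp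
  finally show ?thesis using cancel[OF comp_hom[OF z(1) assms(1)] comp_hom[OF z(1) assms(1)] z(2)] by simp
qed
lemma neg_cmp_l: assumes "f \<in> H A B" "g \<in> H B D" shows "negm C f \<cdot> g = negm C (f \<cdot> g)"
proof -
  have O: "A \<in> Obj C" "D \<in> Obj C" using objs assms by auto
  have n: "negm C f \<in> H A B" using assms by auto
  have fg: "f \<cdot> g \<in> H A D" using assms by auto
  have "f \<cdot> g \<oplus> negm C f \<cdot> g = (f \<oplus> negm C f) \<cdot> g" using distr[OF assms(1) n assms(2)] by simp
  also have "\<dots> = zer C A D" using add_neg[OF assms(1)] comp_zer_l[OF assms(2) O(1)] by simp
  also have "\<dots> = f \<cdot> g \<oplus> negm C (f \<cdot> g)" using add_neg[OF fg] by simp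
  finally show ?thesis using cancel[OF fg comp_hom[OF n assms(2)] neg_hom[OF fg]] by simp
qed
lemma neg_cmp_r: assumes "f \<in> H A B" "g \<in> H B D" shows "f \<cdot> negm C g = negm C (f \<cdot> g)"
proof -
  have O: "A \<in> Obj C" "D \<in> Obj C" using objs assms by auto
  have n: "negm C g \<in> H B D" using assms by auto
  have fg: "f \<cdot> g \<in> H A D" using assms by auto
  have "f \<cdot> g \<oplus> f \<cdot> negm C g = f \<cdot> (g \<oplus> negm C g)" using distl[OF assms(1) assms(2) n] by simp
  also have "\<dots> = zer C A D" using add_neg[OF assms(2)] comp_zer_r[OF assms(1) O(2)] by simp
  also have "\<dots> = f \<cdot> g \<oplus> negm C (f \<cdot> g)" using add_neg[OF fg] by simp
  finally show ?thesis using cancel[OF fg comp_hom[OF assms(1) n] neg_hom[OF fg]] by simp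
qed
lemma neg_zero: assumes "A \<in> Obj C" "B \<in> Obj C" shows "negm C (zer C A B) = zer C A B"
proof -
  have z: "zer C A B \<in> H A B" using assms by auto
  show ?thesis using add_neg[OF z] zero_add[OF neg_hom[OF z]] by simp
qed
lemma eq_of_neg: assumes "f \<in> H A B" "g \<in> H A B" "f \<oplus> negm C g = zer C A B" shows "f = g"
proof -
  have n: "negm C g \<in> H A B" using assms by auto
  have "f = f \<oplus> (g \<oplus> negm C g)" using assms by (simp add: add_neg add_zero)
  also have "\<dots> = f \<oplus> (negm C g \<oplus> g)" using add_comm[OF assms(2) n] by simp
  also have "\<dots> = (f \<oplus> negm C g) \<oplus> g" using add_assoc[OF assms(1) n assms(2)] by simp
  also have "\<dots> = g" using assms(3) zero_add[OF assms(2)] by simp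
  finally show ?thesis .
qed
lemma st_zer: assumes "A \<in> Obj C" "B \<in> Obj C" shows "st (zer C A B) = zer C B A"
proof -
  have z: "zer C A B \<in> H A B" "zer C B A \<in> H B A" using assms by auto
  have s: "st (zer C A B) \<in> H B A" using z by auto
  have "st (zer C A B) \<oplus> st (zer C A B) = st (zer C A B \<oplus> zer C A B)" using st_add[OF z(1) z(1)] by simp
  also have "\<dots> = st (zer C A B) \<oplus> zer C B A" using add_zero[OF z(1)] add_zero[OF s] by simp
  finally show ?thesis using cancel[OF s s z(2)] by simp
qed
lemma st_id: assumes "A \<in> Obj C" shows "st (idm C A) = idm C A"
proof -
  have i: "idm C A \<in> H A A" using assms by auto
  have s: "st (idm C A) \<in> H A A" using i by auto
  have "idm C A = st (idm C A \<cdot> st (idm C A))" using st_st[OF i] idl[OF s] by simp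
  also have "\<dots> = st (st (idm C A)) \<cdot> st (idm C A)" using st_cmp[OF i s] by simp
  also have "\<dots> = st (idm C A)" using st_st[OF i] idl[OF s] by simp
  finally show ?thesis by simp
qed

lemma inv_unique: assumes "is_inverse C A B f g" "is_inverse C A B f g'" shows "g = g'"
proof -
  have h: "f \<in> H A B" "g \<in> H B A" "g' \<in> H B A" "f \<cdot> g = idm C A" "g \<cdot> f = idm C B" "f \<cdot> g' = idm C A"
    using assms unfolding is_inverse_def by auto
  have "g = g \<cdot> (f \<cdot> g')" using h idr by simp
  also have "\<dots> = (g \<cdot> f) \<cdot> g'" using assoc[OF h(2) h(1) h(3)] by simp
  also have "\<dots> = g'" using h idl by simp
  finally show ?thesis .
qed
lemma minv: assumes "invertible C A B f" shows "is_inverse C A B f (minv C A B f)"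
proof -
  obtain g where g: "is_inverse C A B f g" using assms unfolding invertible_def by blast
  have "(THE g. is_inverse C A B f g) = g" using g inv_unique by blast
  then show ?thesis using g unfolding minv_def by simp
qed

lemma add_negc: assumes "f \<in> H A B" "g \<in> H A B" shows "f \<oplus> (g \<oplus> negm C f) = g"
proof -
  have n: "negm C f \<in> H A B" using assms by auto
  have "f \<oplus> (g \<oplus> negm C f) = f \<oplus> (negm C f \<oplus> g)" using add_comm[OF assms(2) n] by simp
  also have "\<dots> = (f \<oplus> negm C f) \<oplus> g" using add_assoc[OF assms(1) n assms(2)] by simp
  also have "\<dots> = g" using add_neg[OF assms(1)] zero_add[OF assms(2)] by simp
  finally show ?thesis .
qed

lemma herm: assumes "Q \<in> H A A" "st Q \<cdot> Q = st Q" shows "st Q = Q"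
proof -
  have s: "st Q \<in> H A A" using assms by auto
  have "Q = st (st Q)" using st_st[OF assms(1)] by simp
  also have "\<dots> = st (st Q \<cdot> Q)" using assms(2) by simp
  also have "\<dots> = st Q \<cdot> Q" using st_cmp[OF s assms(1)] st_st[OF assms(1)] by simp
  also have "\<dots> = st Q" using assms(2) by simp
  finally show ?thesis by simp
qed

lemma rctx: "f \<cdot> g = h \<Longrightarrow> f \<in> H A B \<Longrightarrow> g \<in> H B D \<Longrightarrow> z \<in> H D E \<Longrightarrow> f \<cdot> (g \<cdot> z) = h \<cdot> z"
  using assoc[of f A B g D z E] by simp

end

locale kset = aic + fixes X K a k
  assumes X: "X \<in> Obj C" and a: "a \<in> H X X" and ker: "is_kernel C X X a K k"
begin

lemma k: "k \<in> H K X" and ka: "k \<cdot> a = zer C K X"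
  and kfac: "\<And>M \<alpha>. \<alpha> \<in> H M X \<Longrightarrow> \<alpha> \<cdot> a = zer C M X \<Longrightarrow> \<exists>!\<alpha>'. \<alpha>' \<in> H M K \<and> \<alpha> = \<alpha>' \<cdot> k"
  using ker unfolding is_kernel_def by auto

lemma K: "K \<in> Obj C" using k objs by blast

lemmas S = comp_hom[where A=X and B=X and D=X] comp_hom[where A=X and B=X and D=K] comp_hom[where A=X and B=K and D=X] comp_hom[where A=X and B=K and D=K] comp_hom[where A=K and B=X and D=X] comp_hom[where A=K and B=X and D=K] comp_hom[where A=K and B=K and D=X] comp_hom[where A=K and B=K and D=K] add_hom[where A=X and B=X] neg_hom[where A=X and B=X] st_hom[where A=X and B=X] add_zero[where A=X and B=X] zero_add[where A=X and B=X] add_neg[where A=X and B=X] st_st[where A=X and B=X] st_add[where A=X and B=X] idl[where A=X and B=X] idr[where A=X and B=X] add_negc[where A=X and B=X] add_hom[where A=X and B=K] neg_hom[where A=X and B=K] st_hom[where A=X and B=K] add_zero[where A=X and B=K] zero_add[where A=X and B=K] add_neg[where A=X and B=K] st_st[where A=X and B=K] st_add[where A=X and B=K] idl[where A=X and B=K] idr[where A=X and B=K] add_negc[where A=X and B=K] add_hom[where A=K and B=X] neg_hom[where A=K and B=X] st_hom[where A=K and B=X] add_zero[where A=K and B=X] zero_add[where A=K and B=X] add_neg[where A=K and B=X] st_st[where A=K and B=X] st_add[where A=K and B=X] idl[where A=K and B=X] idr[where A=K and B=X] add_negc[where A=K and B=X] add_hom[where A=K and B=K] neg_hom[where A=K and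 B=K] st_hom[where A=K and B=K] add_zero[where A=K and B=K] zero_add[where A=K and B=K] add_neg[where A=K and B=K] st_st[where A=K and B=K] st_add[where A=K and B=K] idl[where A=K and B=K] idr[where A=K and B=K] add_negc[where A=K and B=K] distl[where A=X and B=X and D=X] distr[where A=X and B=X and D=X] st_cmp[where A=X and B=X and D=X] neg_cmp_l[where A=X and B=X and D=X] neg_cmp_r[where A=X and B=X and D=X] comp_zer_l[where A=X and B=X and D=X] comp_zer_r[where A=X and B=X and D=X] distl[where A=X and B=X and D=K] distr[where A=X and B=X and D=K] st_cmp[where A=X and B=X and D=K] neg_cmp_l[where A=X and B=X and D=K] neg_cmp_r[where A=X and B=X and D=K] comp_zer_l[where A=X and B=X and D=K] comp_zer_r[where A=X and B=X and D=K] distl[where A=X and B=K and D=X] distr[where A=X and B=K and D=X] st_cmp[where A=X and B=K and D=X] neg_cmp_l[where A=X and B=K and D=X] neg_cmp_r[where A=X and B=K and D=X] comp_zer_l[where A=X and B=K and D=X] comp_zer_r[where A=X and B=K and D=X] distl[where A=X and B=K and D=K] distr[where A=X and B=K and D=K] st_cmp[where A=X and B=K and D=K] neg_cmp_l[where A=X and B=K and D=K] neg_cmp_r[where A=X and B=K and D=K] comp_zer_l[where A=X and B=K and D=K] comp_zer_r[where A=X and B=K and D=K] distl[where A=K and B=X and D=X] distr[where A=K and B=X and D=X] st_cmp[where A=K and B=X and D=X] neg_cmp_l[where A=K and B=X and D=X] neg_cmp_r[where A=K and B=X and D=X] comp_zer_l[where A=K and B=X and D=X] comp_zer_r[where A=K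 and B=X and D=X] distl[where A=K and B=X and D=K] distr[where A=K and B=X and D=K] st_cmp[where A=K and B=X and D=K] neg_cmp_l[where A=K and B=X and D=K] neg_cmp_r[where A=K and B=X and D=K] comp_zer_l[where A=K and B=X and D=K] comp_zer_r[where A=K and B=X and D=K] distl[where A=K and B=K and D=X] distr[where A=K and B=K and D=X] st_cmp[where A=K and B=K and D=X] neg_cmp_l[where A=K and B=K and D=X] neg_cmp_r[where A=K and B=K and D=X] comp_zer_l[where A=K and B=K and D=X] comp_zer_r[where A=K and B=K and D=X] distl[where A=K and B=K and D=K] distr[where A=K and B=K and D=K] st_cmp[where A=K and B=K and D=K] neg_cmp_l[where A=K and B=K and D=K] neg_cmp_r[where A=K and B=K and D=K] comp_zer_l[where A=K and B=K and D=K] comp_zer_r[where A=K and B=K and D=K] assoc[where A=X and B=X and D=X and E=X] assoc[where A=X and B=X and D=X and E=K] assoc[where A=X and B=X and D=K and E=X] assoc[where A=X and B=X and D=K and E=K] assoc[where A=X and B=K and D=X and E=X] assoc[where A=X and B=K and D=X and E=K] assoc[where A=X and B=K and D=K and E=X] assoc[where A=X and B=K and D=K and E=K] assoc[where A=K and B=X and D=X and E=X] assoc[where A=K and B=X and D=X and E=K] assoc[where A=K and B=X and D=K and E=X] assoc[where A=K and B=X and D=K and E=K] assoc[where A=K and B=K and D=X and E=X] assoc[where A=K and B=K and D=X and E=K] assoc[where A=K and B=K and D=K and E=X] assoc[where A=K and B=K and D=K and E=K] id_hom zer_hom st_zer st_id neg_zero X a k K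


lemma mono: assumes "f \<in> H M K" "g \<in> H M K" "f \<cdot> k = g \<cdot> k" shows "f = g"
proof -
  have M: "M \<in> Obj C" using assms objs by blast
  have "f \<cdot> k \<cdot> a = zer C M X" using assms k a ka M X by (simp add: assoc comp_zer_r)
  then have "\<exists>!\<alpha>'. \<alpha>' \<in> H M K \<and> f \<cdot> k = \<alpha>' \<cdot> k" using kfac[of "f \<cdot> k" M] assms k by blast
  then show ?thesis using assms by blast
qed

lemma factor: assumes "d \<in> H M X" "d \<cdot> a = zer C M X" obtains t where "t \<in> H M K" "d = t \<cdot> k"
  using kfac[OF assms] by blast

definition core where "core x \<longleftrightarrow> x \<in> H X X \<and> st (a \<cdot> x) = a \<cdot> x \<and> a \<cdot> (x \<cdot> x) = x \<and> x \<cdot> (a \<cdot> a) = a"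

lemma core_basic:
  assumes "core x"
  shows "x \<in> H X X" "st x \<cdot> st a = a \<cdot> x" "a \<cdot> (x \<cdot> x) = x" "x \<cdot> (a \<cdot> a) = a"
    "a \<cdot> (x \<cdot> a) = a" "k \<cdot> x = zer C K X" "x \<cdot> (a \<cdot> x) = x" "st a = st a \<cdot> (a \<cdot> x)"
proof -
  have x: "x \<in> H X X" and h1: "st (a \<cdot> x) = a \<cdot> x" and h2: "a \<cdot> (x \<cdot> x) = x" and h3: "x \<cdot> (a \<cdot> a) = a"
    using assms unfolding core_def by auto
  show "x \<in> H X X" "a \<cdot> (x \<cdot> x) = x" "x \<cdot> (a \<cdot> a) = a" by fact+
  show "st x \<cdot> st a = a \<cdot> x" using h1 x by (simp add: S)
  have "a \<cdot> (x \<cdot> a) = a \<cdot> (x \<cdot> (x \<cdot> (a \<cdot> a)))" using h3 by simp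
  also have "\<dots> = (a \<cdot> (x \<cdot> x)) \<cdot> (a \<cdot> a)" using x by (simp add: S)
  also have "\<dots> = a" using h2 h3 by simp
  finally show axa: "a \<cdot> (x \<cdot> a) = a" .
  have "k \<cdot> x = k \<cdot> (a \<cdot> (x \<cdot> x))" using h2 by simp
  also have "\<dots> = (k \<cdot> a) \<cdot> (x \<cdot> x)" using x by (simp add: S)
  also have "\<dots> = zer C K X" using ka x by (simp add: S)
  finally show "k \<cdot> x = zer C K X" .
  have "x \<cdot> (a \<cdot> x) = x \<cdot> (a \<cdot> (a \<cdot> (x \<cdot> x)))" using h2 by simp
  also have "\<dots> = (x \<cdot> (a \<cdot> a)) \<cdot> (x \<cdot> x)" using x by (simp add: S)
  also have "\<dots> = x" using h2 h3 by simp
  finally show "x \<cdot> (a \<cdot> x) = x" .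
  have "st a = st (a \<cdot> x \<cdot> a)" using axa x by (simp add: S)
  also have "\<dots> = st a \<cdot> st (a \<cdot> x)" using st_cmp[of "a \<cdot> x" X X a X] x a by auto
  also have "\<dots> = st a \<cdot> (a \<cdot> x)" using h1 by simp
  finally show "st a = st a \<cdot> (a \<cdot> x)" .
qed

lemma rc: "f \<cdot> g = h \<Longrightarrow> f \<in> H A B \<Longrightarrow> g \<in> H B D \<Longrightarrow>
   (\<forall>z. z \<in> H D X \<longrightarrow> f \<cdot> (g \<cdot> z) = h \<cdot> z) \<and> (\<forall>z. z \<in> H D K \<longrightarrow> f \<cdot> (g \<cdot> z) = h \<cdot> z)"
  using rctx by blast

lemma rc3: assumes "f \<cdot> (g \<cdot> h) = r" "f \<in> H A B" "g \<in> H B D" "h \<in> H D E"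
  shows "(\<forall>z. z \<in> H E X \<longrightarrow> f \<cdot> (g \<cdot> (h \<cdot> z)) = r \<cdot> z) \<and> (\<forall>z. z \<in> H E K \<longrightarrow> f \<cdot> (g \<cdot> (h \<cdot> z)) = r \<cdot> z)"
proof -
  have "f \<cdot> (g \<cdot> (h \<cdot> z)) = r \<cdot> z" if "z \<in> H E F" for z F
    using assms that assoc[OF assms(3) assms(4) that] assoc[OF assms(2) comp_hom[OF assms(3) assms(4)] that] by simp
  then show ?thesis by blast
qed

lemma fact1:
  assumes g: "\<gamma> \<in> H X K" and kg: "k \<cdot> \<gamma> = idm C K" and ag: "a \<cdot> \<gamma> = zer C X K"
    and x: "x \<in> H X X" and h3: "x \<cdot> (a \<cdot> a) = a"
  shows "x \<cdot> a \<oplus> \<gamma> \<cdot> k = idm C X"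
proof -
  define d where "d = idm C X \<oplus> negm C (x \<cdot> a)"
  have dH: "d \<in> H X X" unfolding d_def using x by (simp add: S)
  have "d \<cdot> a = zer C X X" unfolding d_def using x h3 by (simp add: S)
  then obtain t where t: "t \<in> H X K" "d = t \<cdot> k" using factor dH by blast
  have dg: "d \<cdot> \<gamma> = \<gamma>" unfolding d_def using x g ag by (simp add: S)
  have "t = t \<cdot> (k \<cdot> \<gamma>)" using kg t by (simp add: S)
  also have "\<dots> = d \<cdot> \<gamma>" using t g by (simp add: S)
  finally have "t = \<gamma>" using dg by simp
  then have "d = \<gamma> \<cdot> k" using t by simp
  then have "x \<cdot> a \<oplus> \<gamma> \<cdot> k = x \<cdot> a \<oplus> (idm C X \<oplus> negm C (x \<cdot> a))" unfolding d_def by simp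
  also have "\<dots> = idm C X" using add_negc[OF comp_hom[OF x a] id_hom[OF X]] .
  finally show ?thesis .
qed

lemma forward_gamma:
  assumes "core x"
  obtains \<gamma> where "\<gamma> \<in> H X K" "k \<cdot> \<gamma> = idm C K" "a \<cdot> \<gamma> = zer C X K" "x \<cdot> a \<oplus> \<gamma> \<cdot> k = idm C X"
proof -
  note cb = core_basic[OF assms]
  have x: "x \<in> H X X" by (rule cb(1))
  define d where "d = idm C X \<oplus> negm C (x \<cdot> a)"
  have dH: "d \<in> H X X" unfolding d_def using x by (simp add: S)
  have "d \<cdot> a = zer C X X" unfolding d_def using x cb by (simp add: S)
  then obtain g where g: "g \<in> H X K" "d = g \<cdot> k" using factor dH by blast
  have "x \<cdot> a \<oplus> g \<cdot> k = x \<cdot> a \<oplus> (idm C X \<oplus> negm C (x \<cdot> a))" using g(2) unfolding d_def by simp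
  also have "\<dots> = idm C X" using add_negc[OF comp_hom[OF x a] id_hom[OF X]] .
  finally have E: "x \<cdot> a \<oplus> g \<cdot> k = idm C X" .
  have kxa: "k \<cdot> (x \<cdot> a) = zer C K X" using rc[OF cb(6) k x] by (simp add: S)
  have "k \<cdot> (x \<cdot> a) \<oplus> k \<cdot> (g \<cdot> k) = k \<cdot> (x \<cdot> a \<oplus> g \<cdot> k)" using x g by (simp add: S)
  also have "\<dots> = k" using E by (simp add: S)
  finally have "k \<cdot> (g \<cdot> k) = k" using kxa g by (simp add: S)
  then have "(k \<cdot> g) \<cdot> k = idm C K \<cdot> k" using g by (simp add: S)
  then have kg: "k \<cdot> g = idm C K" by (rule mono[where M=K, rotated 2]) (use g in \<open>simp_all add: S\<close>)
  have "a \<cdot> (x \<cdot> a) \<oplus> a \<cdot> (g \<cdot> k) = a \<cdot> (x \<cdot> a \<oplus> g \<cdot> k)" using x g by (simp add: S)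
  also have "\<dots> = a" using E by (simp add: S)
  finally have "a \<oplus> a \<cdot> (g \<cdot> k) = a \<oplus> zer C X X" using cb(5) by (simp add: S)
  then have "a \<cdot> (g \<cdot> k) = zer C X X" using cancel[of a X X] g by (simp add: S)
  then have "(a \<cdot> g) \<cdot> k = zer C X K \<cdot> k" using g by (simp add: S)
  then have ag: "a \<cdot> g = zer C X K" by (rule mono[where M=X, rotated 2]) (use g in \<open>simp_all add: S\<close>)
  show ?thesis using that g(1) kg ag E by blast
qed

lemma cokernel_gamma:
  assumes g: "\<gamma> \<in> H X K" and kg: "k \<cdot> \<gamma> = idm C K" and ag: "a \<cdot> \<gamma> = zer C X K"
    and y: "y \<in> H X X" and E: "y \<cdot> a \<oplus> \<gamma> \<cdot> k = idm C X"
  shows "is_cokernel C X X a K \<gamma>"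
  unfolding is_cokernel_def
proof (intro conjI allI impI)
  show "\<gamma> \<in> H X K" "a \<cdot> \<gamma> = zer C X K" by fact+
  fix M \<beta> assume h: "\<beta> \<in> H X M \<and> a \<cdot> \<beta> = zer C X M"
  then have b: "\<beta> \<in> H X M" and ab: "a \<cdot> \<beta> = zer C X M" by auto
  have M: "M \<in> Obj C" using b objs by blast
  have kb: "k \<cdot> \<beta> \<in> H K M" using k b by auto
  have "\<beta> = idm C X \<cdot> \<beta>" using idl[OF b] by simp
  also have "\<dots> = (y \<cdot> a) \<cdot> \<beta> \<oplus> (\<gamma> \<cdot> k) \<cdot> \<beta>" using E distr[OF comp_hom[OF y a] comp_hom[OF g k] b] by simp
  also have "\<dots> = y \<cdot> (a \<cdot> \<beta>) \<oplus> \<gamma> \<cdot> (k \<cdot> \<beta>)" using assoc[OF y a b] assoc[OF g k b] by simp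
  also have "\<dots> = zer C X M \<oplus> \<gamma> \<cdot> (k \<cdot> \<beta>)" using ab comp_zer_r[OF y M] by simp
  also have "\<dots> = \<gamma> \<cdot> (k \<cdot> \<beta>)" using zero_add[OF comp_hom[OF g kb]] .
  finally have eq: "\<beta> = \<gamma> \<cdot> (k \<cdot> \<beta>)" .
  show "\<exists>!\<beta>'. \<beta>' \<in> H K M \<and> \<beta> = \<gamma> \<cdot> \<beta>'"
  proof (rule ex1I[of _ "k \<cdot> \<beta>"])
    show "k \<cdot> \<beta> \<in> H K M \<and> \<beta> = \<gamma> \<cdot> (k \<cdot> \<beta>)" using kb eq by simp
    fix b' assume "b' \<in> H K M \<and> \<beta> = \<gamma> \<cdot> b'"
    then have b': "b' \<in> H K M" "\<beta> = \<gamma> \<cdot> b'" by auto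
    have "k \<cdot> \<beta> = (k \<cdot> \<gamma>) \<cdot> b'" using b' assoc[OF k g b'(1)] by simp
    also have "\<dots> = b'" using kg idl[OF b'(1)] by simp
    finally show "b' = k \<cdot> \<beta>" by simp
  qed
qed

lemma core_unique: assumes "core x" "core y" shows "x = y"
proof -
  note cx = core_basic[OF assms(1)] and cy = core_basic[OF assms(2)]
  obtain g where g: "g \<in> H X K" "k \<cdot> g = idm C K" "a \<cdot> g = zer C X K" "x \<cdot> a \<oplus> g \<cdot> k = idm C X"
    using forward_gamma[OF assms(1)] by blast
  have Ey: "y \<cdot> a \<oplus> g \<cdot> k = idm C X" using fact1[OF g(1-3) cy(1) cy(4)] .
  have "g \<cdot> k \<oplus> x \<cdot> a = g \<cdot> k \<oplus> y \<cdot> a" using g(4) Ey g(1) cx(1) cy(1)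
    by (simp add: add_comm[of "g \<cdot> k" X X] S)
  then have xa: "x \<cdot> a = y \<cdot> a" using cancel[of "g \<cdot> k" X X] g(1) cx(1) cy(1) by (simp add: S)
  define P where "P = a \<cdot> x"
  define Q where "Q = a \<cdot> y"
  have PH: "P \<in> H X X" "Q \<in> H X X" unfolding P_def Q_def using cx(1) cy(1) by (simp_all add: S)
  have sP: "st P = P" unfolding P_def using cx(1) cx(2) by (simp add: S)
  have sQ: "st Q = Q" unfolding Q_def using cy(1) cy(2) by (simp add: S)
  have "Q \<cdot> P = (a \<cdot> (y \<cdot> a)) \<cdot> x" unfolding P_def Q_def using cx(1) cy(1) by (simp add: S)
  then have QP: "Q \<cdot> P = P" unfolding P_def using cy(5) by simp
  have "P \<cdot> Q = (a \<cdot> (x \<cdot> a)) \<cdot> y" unfolding P_def Q_def using cx(1) cy(1) by (simp add: S)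
  then have PQ: "P \<cdot> Q = Q" unfolding Q_def using cx(5) by simp
  have "P = st P" using sP by simp
  also have "\<dots> = st (Q \<cdot> P)" using QP by simp
  also have "\<dots> = P \<cdot> Q" using st_cmp[OF PH(2) PH(1)] sP sQ by simp
  also have "\<dots> = Q" using PQ .
  finally have ax: "a \<cdot> x = a \<cdot> y" unfolding P_def Q_def .
  have "x = x \<cdot> (a \<cdot> y)" using cx(7) ax by simp
  also have "\<dots> = (y \<cdot> a) \<cdot> y" using xa cx(1) cy(1) assoc[OF cx(1) a cy(1)] by simp
  also have "\<dots> = y" using cy(7) cy(1) by (simp add: S)
  finally show ?thesis .
qed

lemma forward_inv:
  assumes "core x" and g: "\<gamma> \<in> H X K" and kg: "k \<cdot> \<gamma> = idm C K" and ag: "a \<cdot> \<gamma> = zer C X K"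
    and E: "x \<cdot> a \<oplus> \<gamma> \<cdot> k = idm C X"
  shows "is_inverse C X X (st a \<cdot> (a \<cdot> (a \<cdot> a)) \<oplus> st k \<cdot> k) (x \<cdot> (x \<cdot> (x \<cdot> st x)) \<oplus> \<gamma> \<cdot> st \<gamma>)"
proof -
  note cb = core_basic[OF assms(1)]
  have x: "x \<in> H X X" by (rule cb(1))
  have Es: "st a \<cdot> st x \<oplus> st k \<cdot> st \<gamma> = idm C X"
  proof -
    have "st (x \<cdot> a \<oplus> \<gamma> \<cdot> k) = st (idm C X)" using E by simp
    then show ?thesis using x g by (simp add: S)
  qed
  have sxk: "st x \<cdot> st k = zer C X K"
  proof -
    have "st (k \<cdot> x) = zer C X K" using cb(6) by (simp add: S)
    then show ?thesis using x by (simp add: S)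
  qed
  have sga: "st \<gamma> \<cdot> st a = zer C K X"
  proof -
    have "st (a \<cdot> \<gamma>) = zer C K X" using ag by (simp add: S)
    then show ?thesis using g by (simp add: S)
  qed
  have sgk: "st \<gamma> \<cdot> st k = idm C K"
  proof -
    have "st (k \<cdot> \<gamma>) = idm C K" using kg by (simp add: S)
    then show ?thesis using g by (simp add: S)
  qed
  have sa2: "st a \<cdot> (a \<cdot> x) = st a" using cb(8) by simp
  have uH: "st a \<cdot> (a \<cdot> (a \<cdot> a)) \<oplus> st k \<cdot> k \<in> H X X" by (simp add: S)
  have vH: "x \<cdot> (x \<cdot> (x \<cdot> st x)) \<oplus> \<gamma> \<cdot> st \<gamma> \<in> H X X" using x g by (simp add: S)
  have uv: "(st a \<cdot> (a \<cdot> (a \<cdot> a)) \<oplus> st k \<cdot> k) \<cdot> (x \<cdot> (x \<cdot> (x \<cdot> st x)) \<oplus> \<gamma> \<cdot> st \<gamma>) = idm C X"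
    using x g rc3[OF cb(3) a x x] rc[OF ag a g] rc[OF cb(6) k x] rc[OF kg k g]
      rc3[OF sa2 st_hom[OF a] a x] Es cb(3)
    by (simp add: S)
  have vu: "(x \<cdot> (x \<cdot> (x \<cdot> st x)) \<oplus> \<gamma> \<cdot> st \<gamma>) \<cdot> (st a \<cdot> (a \<cdot> (a \<cdot> a)) \<oplus> st k \<cdot> k) = idm C X"
    using x g rc[OF cb(2) st_hom[OF x] st_hom[OF a]] rc3[OF cb(4) x a a] rc[OF sxk st_hom[OF x] st_hom[OF k]]
      rc[OF sga st_hom[OF g] st_hom[OF a]] rc[OF sgk st_hom[OF g] st_hom[OF k]] cb(4) E
    by (simp add: S)
  show ?thesis unfolding is_inverse_def using uH vH uv vu by blast
qed

lemma backward:
  assumes g: "\<gamma> \<in> H X K" and kg: "k \<cdot> \<gamma> = idm C K" and ag: "a \<cdot> \<gamma> = zer C X K"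
    and inv: "is_inverse C X X (st a \<cdot> (a \<cdot> (a \<cdot> a)) \<oplus> st k \<cdot> k) w"
  shows "core (a \<cdot> (a \<cdot> (w \<cdot> st a)))"
proof -
  have w: "w \<in> H X X" and wu: "w \<cdot> (st a \<cdot> (a \<cdot> (a \<cdot> a)) \<oplus> st k \<cdot> k) = idm C X"
    and uw: "(st a \<cdot> (a \<cdot> (a \<cdot> a)) \<oplus> st k \<cdot> k) \<cdot> w = idm C X"
    using inv unfolding is_inverse_def by auto
  have sga: "st \<gamma> \<cdot> st a = zer C K X"
  proof -
    have "st (a \<cdot> \<gamma>) = zer C K X" using ag by (simp add: S)
    then show ?thesis using g by (simp add: S)
  qed
  have sgk: "st \<gamma> \<cdot> st k = idm C K"
  proof -
    have "st (k \<cdot> \<gamma>) = idm C K" using kg by (simp add: S)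
    then show ?thesis using g by (simp add: S)
  qed
  have W1: "w \<cdot> (st a \<cdot> (a \<cdot> (a \<cdot> a))) \<oplus> w \<cdot> (st k \<cdot> k) = idm C X" using wu w by (simp add: S)
  have U1: "st a \<cdot> (a \<cdot> (a \<cdot> (a \<cdot> w))) \<oplus> st k \<cdot> (k \<cdot> w) = idm C X" using uw w by (simp add: S)
  have "\<gamma> = (w \<cdot> (st a \<cdot> (a \<cdot> (a \<cdot> a))) \<oplus> w \<cdot> (st k \<cdot> k)) \<cdot> \<gamma>" using W1 g by (simp add: S)
  also have "\<dots> = w \<cdot> st k" using w g rc[OF ag a g] rc[OF kg k g] ag kg by (simp add: S)
  finally have wk: "w \<cdot> st k = \<gamma>" by simp
  have "st \<gamma> = st \<gamma> \<cdot> (st a \<cdot> (a \<cdot> (a \<cdot> (a \<cdot> w))) \<oplus> st k \<cdot> (k \<cdot> w))" using U1 g by (simp add: S)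
  also have "\<dots> = k \<cdot> w" using w g rc[OF sga st_hom[OF g] st_hom[OF a]] rc[OF sgk st_hom[OF g] st_hom[OF k]] sga sgk by (simp add: S)
  finally have kw: "k \<cdot> w = st \<gamma>" by simp
  have E1: "w \<cdot> (st a \<cdot> (a \<cdot> (a \<cdot> a))) \<oplus> \<gamma> \<cdot> k = idm C X"
    using W1 w rc[OF wk w st_hom[OF k]] wk by (simp add: S)
  have E2: "st a \<cdot> (a \<cdot> (a \<cdot> (a \<cdot> w))) \<oplus> st k \<cdot> st \<gamma> = idm C X"
    using U1 kw by simp
  define x where "x = a \<cdot> (a \<cdot> (w \<cdot> st a))"
  have x: "x \<in> H X X" unfolding x_def using w by (simp add: S)
  have i1: "st a \<cdot> (a \<cdot> x) = st a"
  proof -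
    have "st a = (st a \<cdot> (a \<cdot> (a \<cdot> (a \<cdot> w))) \<oplus> st k \<cdot> st \<gamma>) \<cdot> st a" using E2 by (simp add: S)
    also have "\<dots> = st a \<cdot> (a \<cdot> x)" unfolding x_def using w g rc[OF sga st_hom[OF g] st_hom[OF a]] sga by (simp add: S)
    finally show ?thesis by simp
  qed
  have herm1: "st (a \<cdot> x) = a \<cdot> x"
  proof (rule herm)
    show "a \<cdot> x \<in> H X X" using x by (simp add: S)
    have "st (a \<cdot> x) \<cdot> (a \<cdot> x) = st x \<cdot> (st a \<cdot> (a \<cdot> x))" using x by (simp add: S)
    also have "\<dots> = st (a \<cdot> x)" using i1 x by (simp add: S)
    finally show "st (a \<cdot> x) \<cdot> (a \<cdot> x) = st (a \<cdot> x)" .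
  qed
  have i3: "a \<cdot> (a \<cdot> (w \<cdot> (st a \<cdot> (a \<cdot> (a \<cdot> a))))) = a \<cdot> a"
  proof -
    have "a \<cdot> a = a \<cdot> (a \<cdot> (w \<cdot> (st a \<cdot> (a \<cdot> (a \<cdot> a))) \<oplus> \<gamma> \<cdot> k))" using E1 by (simp add: S)
    also have "\<dots> = a \<cdot> (a \<cdot> (w \<cdot> (st a \<cdot> (a \<cdot> (a \<cdot> a)))))" using w g rc[OF ag a g] ag by (simp add: S)
    finally show ?thesis by simp
  qed
  have i4: "x \<cdot> (a \<cdot> a) = a"
  proof -
    define d where "d = x \<cdot> (a \<cdot> a) \<oplus> negm C a"
    have dH: "d \<in> H X X" unfolding d_def using x by (simp add: S)
    have "d \<cdot> a = zer C X X" unfolding d_def x_def using w i3 by (simp add: S)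
    then obtain t where t: "t \<in> H X K" "d = t \<cdot> k" using factor dH by blast
    have dg: "d \<cdot> \<gamma> = zer C X K" unfolding d_def x_def using w g rc[OF ag a g] ag by (simp add: S)
    have "t = t \<cdot> (k \<cdot> \<gamma>)" using kg t by (simp add: S)
    also have "\<dots> = d \<cdot> \<gamma>" using t g by (simp add: S)
    finally have "t = zer C X K" using dg by simp
    then have "d = zer C X X" using t by (simp add: S)
    then show ?thesis using eq_of_neg[of "x \<cdot> (a \<cdot> a)" X X a] x unfolding d_def by (simp add: S)
  qed
  have i5: "a \<cdot> (x \<cdot> x) = x"
  proof -
    have "a \<cdot> (x \<cdot> x) = a \<cdot> ((x \<cdot> (a \<cdot> a)) \<cdot> (w \<cdot> st a))" unfolding x_def using w by (simp add: S)
    also have "\<dots> = a \<cdot> (a \<cdot> (w \<cdot> st a))" by (simp only: i4)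
    also have "\<dots> = x" unfolding x_def ..
    finally show ?thesis .
  qed
  show ?thesis unfolding core_def x_def[symmetric] using x herm1 i4 i5 by blast
qed

end

theorem theorem2p3:
  fixes C :: "('o, 'm) icat" and X K :: 'o and \<phi> \<kappa> :: 'm
  assumes "is_additive_inv_cat C"
    and "X \<in> Obj C" and "\<phi> \<in> Hom C X X"
    and "is_kernel C X X \<phi> K \<kappa>"
  shows "(has_core_inverse C X \<phi> \<longleftrightarrow>
           (\<exists>L lm. is_cokernel C X X \<phi> L lm \<and>
              invertible C K L (cmp C \<kappa> lm) \<and>
              invertible C X X (addm C (cmp C (star C \<phi>) (cmp C \<phi> (cmp C \<phi> \<phi>)))
                                       (cmp C (star C \<kappa>) \<kappa>)))) \<and>
         (\<forall>L lm. has_core_inverse C X \<phi> \<and> is_cokernel C X X \<phi> L lm \<and>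
           invertible C K L (cmp C \<kappa> lm) \<and>
           invertible C X X (addm C (cmp C (star C \<phi>) (cmp C \<phi> (cmp C \<phi> \<phi>)))
                                    (cmp C (star C \<kappa>) \<kappa>)) \<longrightarrow>
           is_cokernel C X X \<phi> K (cmp C lm (minv C K L (cmp C \<kappa> lm))) \<and>
           addm C (cmp C (core_inv C X \<phi>) \<phi>)
                  (cmp C (cmp C lm (minv C K L (cmp C \<kappa> lm))) \<kappa>) = idm C X \<and>
           core_inv C X \<phi> =
             cmp C (cmp C \<phi> \<phi>)
               (cmp C (minv C X X (addm C (cmp C (star C \<phi>) (cmp C \<phi> (cmp C \<phi> \<phi>)))
                                          (cmp C (star C \<kappa>) \<kappa>)))
                      (star C \<phi>)))"
proof -
  interpret kset C X K \<phi> \<kappa>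
    by (intro kset.intro aic.intro kset_axioms.intro) (fact assms)+
  have coreq: "\<And>x. is_core_inverse C X \<phi> x \<longleftrightarrow> core x"
    unfolding is_core_inverse_def core_def by simp
  have hc: "has_core_inverse C X \<phi> \<longleftrightarrow> (\<exists>x. core x)"
    unfolding has_core_inverse_def coreq ..
  have fwd: "\<exists>L lm. is_cokernel C X X \<phi> L lm \<and>
              invertible C K L (cmp C \<kappa> lm) \<and>
              invertible C X X (addm C (cmp C (star C \<phi>) (cmp C \<phi> (cmp C \<phi> \<phi>))) (cmp C (star C \<kappa>) \<kappa>))"
    if xc: "core x" for x
  proof -
    obtain g where g: "g \<in> H X K" "\<kappa> \<cdot> g = idm C K" "\<phi> \<cdot> g = zer C X K" "x \<cdot> \<phi> \<oplus> g \<cdot> \<kappa> = idm C X"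
      using forward_gamma[OF xc] by blast
    have ck: "is_cokernel C X X \<phi> K g" using cokernel_gamma[OF g(1-3) core_basic(1)[OF xc] g(4)] .
    have i1: "invertible C K K (\<kappa> \<cdot> g)" unfolding invertible_def is_inverse_def
      using g K by (intro exI[of _ "idm C K"]) (simp add: S)
    have i2: "invertible C X X (st \<phi> \<cdot> (\<phi> \<cdot> (\<phi> \<cdot> \<phi>)) \<oplus> st \<kappa> \<cdot> \<kappa>)"
      unfolding invertible_def using forward_inv[OF xc g(1-4)] by blast
    show ?thesis using ck i1 i2 by blast
  qed
  have bwd: "\<exists>x. core x \<and> x = \<phi> \<cdot> \<phi> \<cdot> (minv C X X (st \<phi> \<cdot> (\<phi> \<cdot> (\<phi> \<cdot> \<phi>)) \<oplus> st \<kappa> \<cdot> \<kappa>) \<cdot> st \<phi>)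
     \<and> x \<cdot> \<phi> \<oplus> lm \<cdot> minv C K L (\<kappa> \<cdot> lm) \<cdot> \<kappa> = idm C X
     \<and> is_cokernel C X X \<phi> K (lm \<cdot> minv C K L (\<kappa> \<cdot> lm))"
    if ck: "is_cokernel C X X \<phi> L lm" and i1: "invertible C K L (\<kappa> \<cdot> lm)"
      and i2: "invertible C X X (st \<phi> \<cdot> (\<phi> \<cdot> (\<phi> \<cdot> \<phi>)) \<oplus> st \<kappa> \<cdot> \<kappa>)" for L lm
  proof -
    define m where "m = minv C K L (\<kappa> \<cdot> lm)"
    define w where "w = minv C X X (st \<phi> \<cdot> (\<phi> \<cdot> (\<phi> \<cdot> \<phi>)) \<oplus> st \<kappa> \<cdot> \<kappa>)"
    have mi: "is_inverse C K L (\<kappa> \<cdot> lm) m" unfolding m_def by (rule minv[OF i1])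
    have wi: "is_inverse C X X (st \<phi> \<cdot> (\<phi> \<cdot> (\<phi> \<cdot> \<phi>)) \<oplus> st \<kappa> \<cdot> \<kappa>) w" unfolding w_def by (rule minv[OF i2])
    have lm: "lm \<in> H X L" and al: "\<phi> \<cdot> lm = zer C X L" using ck unfolding is_cokernel_def by auto
    have m: "m \<in> H L K" and km: "\<kappa> \<cdot> lm \<cdot> m = idm C K" using mi unfolding is_inverse_def by auto
    define g where "g = lm \<cdot> m"
    have gH: "g \<in> H X K" unfolding g_def using lm m by auto
    have kg: "\<kappa> \<cdot> g = idm C K" unfolding g_def using km assoc[OF k lm m] by simp
    have ag: "\<phi> \<cdot> g = zer C X K" unfolding g_def using assoc[OF a lm m] al comp_zer_l[OF m X] by simp
    have c: "core (\<phi> \<cdot> (\<phi> \<cdot> (w \<cdot> st \<phi>)))" by (rule backward[OF gH kg ag wi])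
    have E: "\<phi> \<cdot> (\<phi> \<cdot> (w \<cdot> st \<phi>)) \<cdot> \<phi> \<oplus> g \<cdot> \<kappa> = idm C X"
      by (rule fact1[OF gH kg ag core_basic(1)[OF c] core_basic(4)[OF c]])
    have ck2: "is_cokernel C X X \<phi> K g"
      by (rule cokernel_gamma[OF gH kg ag core_basic(1)[OF c] E])
    have eqx: "\<phi> \<cdot> (\<phi> \<cdot> (w \<cdot> st \<phi>)) = \<phi> \<cdot> \<phi> \<cdot> (w \<cdot> st \<phi>)"
      using wi unfolding is_inverse_def by (simp add: S)
    show ?thesis
      using c E ck2 eqx unfolding g_def m_def w_def by (intro exI[of _ "\<phi> \<cdot> (\<phi> \<cdot> (w \<cdot> st \<phi>))"]) (simp add: w_def)
  qed
  show ?thesis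
  proof (intro conjI allI impI)
    show "has_core_inverse C X \<phi> \<longleftrightarrow> (\<exists>L lm. is_cokernel C X X \<phi> L lm \<and>
              invertible C K L (cmp C \<kappa> lm) \<and>
              invertible C X X (addm C (cmp C (star C \<phi>) (cmp C \<phi> (cmp C \<phi> \<phi>))) (cmp C (star C \<kappa>) \<kappa>)))"
      unfolding hc using fwd bwd by blast
  next
    fix L lm
    assume h: "has_core_inverse C X \<phi> \<and> is_cokernel C X X \<phi> L lm \<and>
           invertible C K L (cmp C \<kappa> lm) \<and>
           invertible C X X (addm C (cmp C (star C \<phi>) (cmp C \<phi> (cmp C \<phi> \<phi>))) (cmp C (star C \<kappa>) \<kappa>))"
    then obtain x where x: "core x"
      and xe: "x = \<phi> \<cdot> \<phi> \<cdot> (minv C X X (st \<phi> \<cdot> (\<phi> \<cdot> (\<phi> \<cdot> \<phi>)) \<oplus> st \<kappa> \<cdot> \<kappa>) \<cdot> st \<phi>)"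
      and xE: "x \<cdot> \<phi> \<oplus> lm \<cdot> minv C K L (\<kappa> \<cdot> lm) \<cdot> \<kappa> = idm C X"
      and ck: "is_cokernel C X X \<phi> K (lm \<cdot> minv C K L (\<kappa> \<cdot> lm))"
      using bwd by blast
    have ci: "core_inv C X \<phi> = x" unfolding core_inv_def coreq
      using x core_unique by blast
    show "is_cokernel C X X \<phi> K (cmp C lm (minv C K L (cmp C \<kappa> lm)))" using ck .
    show "addm C (cmp C (core_inv C X \<phi>) \<phi>) (cmp C (cmp C lm (minv C K L (cmp C \<kappa> lm))) \<kappa>) = idm C X"
      using xE ci by simp
    show "core_inv C X \<phi> = cmp C (cmp C \<phi> \<phi>)
               (cmp C (minv C X X (addm C (cmp C (star C \<phi>) (cmp C \<phi> (cmp C \<phi> \<phi>))) (cmp C (star C \<kappa>) \<kappa>)))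
                      (star C \<phi>))"
      using ci xe by simp
  qed
qed

end
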